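(* Let $q\in\mathbb{C}^{\ast}$ with $|q|=1$, $q$ not a root of unity, and suppose $q$ does not satisfy the Liouville property, i.e. there exist $C,L>0$ such that $|q^n-1|\ge C|n|^{-L}$ for all integers $n\neq0$. Then the Picard group $Pic({\cal B}_q)$ is an extension of $\mathbb{Z}$ by $\mathbb{C}^{\ast}/q^{\mathbb{Z}}$, i.e. there is a short exact sequence of groups $0\to\mathbb{C}^{\ast}/q^{\mathbb{Z}}\to Pic({\cal B}_q)\to\mathbb{Z}\to0$.
   Context: ${\cal O}(\mathbb{C}^{\ast})$ is the algebra of holomorphic functions on $\mathbb{C}^{\ast}$. $A_q^{an}$ is the algebra generated by ${\cal O}(\mathbb{C}^{\ast})$ and an invertible generator $\xi$ with $\xi f(z)=f(qz)\xi$. ${\cal B}_q$ is the category of $A_q^{an}$-modules which are finitely presentable over ${\cal O}(\mathbb{C}^{\ast})$. $Pic({\cal B}_q)$ is the set of isomorphism classes of objects of ${\cal B}_q$ which are rank one (free) modules over ${\cal O}(\mathbb{C}^{\ast})$, with the group structure given by tensor product over ${\cal O}(\mathbb{C}^{\ast})$. *)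

theory Defs
  imports "HOL-Complex_Analysis.Complex_Analysis" "HOL-Algebra.Algebra"
begin

text \<open>The ring O(C^*) of holomorphic functions on C^*; elements are represented by
  functions complex => complex, normalised by the value 0 at the point 0.\<close>
definition Ohol :: "(complex \<Rightarrow> complex) set" where
  "Ohol = {f. f holomorphic_on (- {0}) \<and> f 0 = 0}"

definition one_O :: "complex \<Rightarrow> complex" where
  "one_O = (\<lambda>z. if z = 0 then 0 else 1)"

definition qshift :: "complex \<Rightarrow> (complex \<Rightarrow> complex) \<Rightarrow> (complex \<Rightarrow> complex)" where
  "qshift q f = (\<lambda>z. f (q * z))"

text \<open>An object of B_q which is free of rank one over O(C^*): after transporting the
  structure along an O-module isomorphism M = O, it is O itself with an action of the
  invertible generator xi, i.e. an additive bijection Phi of O with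
  Phi (f * g) = f(qz) * Phi g.\<close>
definition rank1_obj :: "complex \<Rightarrow> ((complex \<Rightarrow> complex) \<Rightarrow> (complex \<Rightarrow> complex)) \<Rightarrow> bool" where
  "rank1_obj q \<Phi> \<longleftrightarrow> bij_betw \<Phi> Ohol Ohol
     \<and> (\<forall>f\<in>Ohol. \<forall>g\<in>Ohol. \<Phi> (\<lambda>z. f z + g z) = (\<lambda>z. \<Phi> f z + \<Phi> g z))
     \<and> (\<forall>f\<in>Ohol. \<forall>g\<in>Ohol. \<Phi> (\<lambda>z. f z * g z) = (\<lambda>z. qshift q f z * \<Phi> g z))"

definition obj_iso :: "((complex \<Rightarrow> complex) \<Rightarrow> (complex \<Rightarrow> complex)) \<Rightarrow>
    ((complex \<Rightarrow> complex) \<Rightarrow> (complex \<Rightarrow> complex)) \<Rightarrow> bool" where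
  "obj_iso \<Phi> \<Psi> \<longleftrightarrow> (\<exists>T. bij_betw T Ohol Ohol
     \<and> (\<forall>f\<in>Ohol. \<forall>g\<in>Ohol. T (\<lambda>z. f z + g z) = (\<lambda>z. T f z + T g z))
     \<and> (\<forall>f\<in>Ohol. \<forall>g\<in>Ohol. T (\<lambda>z. f z * g z) = (\<lambda>z. f z * T g z))
     \<and> (\<forall>f\<in>Ohol. T (\<Phi> f) = \<Psi> (T f)))"

definition pic_class :: "complex \<Rightarrow> ((complex \<Rightarrow> complex) \<Rightarrow> (complex \<Rightarrow> complex)) \<Rightarrow>
    ((complex \<Rightarrow> complex) \<Rightarrow> (complex \<Rightarrow> complex)) set" where
  "pic_class q \<Phi> = {\<Psi>. rank1_obj q \<Psi> \<and> obj_iso \<Phi> \<Psi>}"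

text \<open>Tensor product over O: under O (x)_O O = O, f (x) g |-> f g, the diagonal action
  xi (f (x) g) = xi f (x) xi g becomes  f = f (x) 1 |-> Phi1 f * Phi2 1.\<close>
definition obj_tensor :: "((complex \<Rightarrow> complex) \<Rightarrow> (complex \<Rightarrow> complex)) \<Rightarrow>
    ((complex \<Rightarrow> complex) \<Rightarrow> (complex \<Rightarrow> complex)) \<Rightarrow>
    ((complex \<Rightarrow> complex) \<Rightarrow> (complex \<Rightarrow> complex))" where
  "obj_tensor \<Phi>1 \<Phi>2 = (\<lambda>f. if f \<in> Ohol then (\<lambda>z. \<Phi>1 f z * \<Phi>2 one_O z) else f)"

definition Pic_Bq :: "complex \<Rightarrow> ((complex \<Rightarrow> complex) \<Rightarrow> (complex \<Rightarrow> complex)) set monoid" where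
  "Pic_Bq q = \<lparr> carrier = {pic_class q \<Phi> | \<Phi>. rank1_obj q \<Phi>},
     monoid.mult = (\<lambda>A B. pic_class q (obj_tensor (SOME \<Phi>. \<Phi> \<in> A) (SOME \<Psi>. \<Psi> \<in> B))),
     one = pic_class q (qshift q) \<rparr>"

definition qorbit :: "complex \<Rightarrow> complex \<Rightarrow> complex set" where
  "qorbit q w = {w * q powi n | n. True}"

definition Cstar_mod_q :: "complex \<Rightarrow> complex set monoid" where
  "Cstar_mod_q q = \<lparr> carrier = {qorbit q w | w. w \<noteq> 0},
     monoid.mult = (\<lambda>A B. {a * b | a b. a \<in> A \<and> b \<in> B}),
     one = qorbit q 1 \<rparr>"

end

theory Submission
  imports Defs
begin

lemma circlepath_0: "circlepath 0 r t = r * exp (2 * of_real pi * \<i> * of_real t)"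
  by (simp add: circlepath_def part_circlepath_def linepath_def mult_ac)

lemma circ_indep:
  assumes holF: "F holomorphic_on S" and S: "open S" and r: "0 < r" and s: "0 < s"
    and sub: "\<And>w. min r s \<le> norm w \<Longrightarrow> norm w \<le> max r s \<Longrightarrow> w \<in> S"
  shows "contour_integral (circlepath 0 r) F = contour_integral (circlepath 0 s) F"
proof (rule Cauchy_theorem_homotopic_loops[OF _ S holF])
  show "homotopic_loops S (circlepath 0 r) (circlepath 0 s)"
  proof (rule homotopic_loops_linear)
    fix t :: real assume t: "t \<in> {0..1}"
    show "closed_segment (circlepath 0 r t) (circlepath 0 s t) \<subseteq> S"
    proof
      fix x assume "x \<in> closed_segment (circlepath 0 r t) (circlepath 0 s t)"
      then obtain u where u: "0 \<le> u" "u \<le> 1"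
        and x: "x = (1 - u) *\<^sub>R circlepath 0 r t + u *\<^sub>R circlepath 0 s t"
        by (auto simp: closed_segment_def)
      define e where "e = exp (2 * of_real pi * \<i> * of_real t)"
      have ne: "norm e = 1" unfolding e_def by (simp add: norm_exp_eq_Re)
      have "x = of_real ((1 - u) * r + u * s) * e"
        by (simp add: x circlepath_0 e_def scaleR_conv_of_real algebra_simps)
      hence "norm x = \<bar>(1 - u) * r + u * s\<bar>"
        using ne by (simp only: norm_mult norm_of_real) simp
      hence nx: "norm x = (1 - u) * r + u * s"
        using u r s by simp
      have e1: "(1 - u) * r + u * s = r + u * (s - r)" by (simp add: algebra_simps)
      have "r \<le> s \<Longrightarrow> u * (s - r) \<le> 1 * (s - r)" using mult_right_mono[OF u(2)] by simp
      moreover have "s < r \<Longrightarrow> u * (s - r) \<ge> 1 * (s - r)" using mult_right_mono_neg[OF u(2)] by simp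
      moreover have "r \<le> s \<Longrightarrow> 0 \<le> u * (s - r)" using u by simp
      moreover have "s < r \<Longrightarrow> u * (s - r) \<le> 0" using u by (simp add: mult_nonneg_nonpos)
      ultimately have "min r s \<le> (1 - u) * r + u * s" "(1 - u) * r + u * s \<le> max r s"
        unfolding e1 by (smt (verit))+
      thus "x \<in> S" using sub nx by auto
    qed
  qed auto
qed auto

lemma cont_div_circle:
  assumes h: "h holomorphic_on (- {0})" and z: "norm z \<noteq> R" and R: "0 < R"
  shows "continuous_on (sphere 0 R) (\<lambda>w. h w / (w - z))"
proof -
  have "continuous_on (sphere 0 R) h"
    by (rule continuous_on_subset[OF holomorphic_on_imp_continuous_on[OF h]]) (use R in auto)
  moreover have "\<forall>w\<in>sphere 0 R. w - z \<noteq> 0" using z by auto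
  ultimately show ?thesis by (intro continuous_intros) auto
qed

lemma cint_integrable:
  assumes h: "h holomorphic_on (- {0})" and z: "norm z \<noteq> R" and R: "0 < R"
  shows "(\<lambda>w. h w / (w - z)) contour_integrable_on (circlepath 0 R)"
  using cont_div_circle[OF assms] R by (intro contour_integrable_continuous_circlepath) simp

lemma cint_indep_z:
  assumes h: "h holomorphic_on (- {0})" and R: "norm z < R" and R': "norm z < R'"
  shows "contour_integral (circlepath 0 R) (\<lambda>w. h w / (w - z))
       = contour_integral (circlepath 0 R') (\<lambda>w. h w / (w - z))"
proof (rule circ_indep[where S = "- {0} - {z}"])
  show "(\<lambda>w. h w / (w - z)) holomorphic_on - {0} - {z}"
    by (intro holomorphic_intros holomorphic_on_subset[OF h]) auto
  show "open (- {0} - {z} :: complex set)" by (auto intro: open_Diff)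
  show "0 < R" "0 < R'" using R R' norm_ge_zero[of z] by linarith+
  fix w :: complex assume "min R R' \<le> norm w"
  hence "norm z < norm w" using R R' by linarith
  thus "w \<in> - {0} - {z}" by auto
qed

definition Pp :: "(complex \<Rightarrow> complex) \<Rightarrow> complex \<Rightarrow> complex" where
  "Pp h z = contour_integral (circlepath 0 (norm z + 1)) (\<lambda>w. h w / (w - z))"

lemma Pp_eq:
  assumes h: "h holomorphic_on (- {0})" and R: "norm z < R"
  shows "Pp h z = contour_integral (circlepath 0 R) (\<lambda>w. h w / (w - z))"
  unfolding Pp_def by (rule cint_indep_z[OF h _ R]) simp

lemma Pp_holo:
  assumes h: "h holomorphic_on (- {0})"
  shows "Pp h holomorphic_on UNIV"
proof -
  have "Pp h field_differentiable at z0" for z0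
  proof -
    define R where "R = norm z0 + 1"
    have R: "0 < R" unfolding R_def by (smt (verit) norm_ge_zero)
    define g where "g z = contour_integral (circlepath 0 R) (\<lambda>w. h w / (w - z))" for z
    have contf: "continuous_on (path_image (circlepath 0 R)) h"
      by (rule continuous_on_subset[OF holomorphic_on_imp_continuous_on[OF h]]) (use R in auto)
    have int: "((\<lambda>u. h u / (u - w) ^ 1) has_contour_integral g w) (circlepath 0 R)"
      if "w \<in> ball 0 R" for w
    proof -
      have "norm w \<noteq> R" using that by auto
      from has_contour_integral_integral[OF cint_integrable[OF h this R]]
      show ?thesis by (simp add: g_def)
    qed
    have "g holomorphic_on ball 0 R"
    proof (subst holomorphic_on_open, simp, intro ballI exI)
      fix w :: complex assume "w \<in> ball 0 R"
      from Cauchy_next_derivative_circlepath(2)[OF contf int _ this]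
      show "(g has_field_derivative (of_nat 1 * contour_integral (circlepath 0 R) (\<lambda>u. h u / (u - w) ^ Suc 1))) (at w)"
        by simp
    qed
    moreover have "g z = Pp h z" if "z \<in> ball 0 R" for z
      using Pp_eq[OF h, of z R] that by (simp add: g_def)
    ultimately have "Pp h holomorphic_on ball 0 R" by (rule holomorphic_transform)
    moreover have "z0 \<in> ball 0 R" by (simp add: R_def)
    ultimately show ?thesis
      using holomorphic_on_imp_differentiable_at open_ball by blast
  qed
  thus ?thesis by (simp add: holomorphic_on_def field_differentiable_at_within)
qed

lemma annulus_formula:
  assumes h: "h holomorphic_on (- {0})" and r: "0 < r" "r < norm z" and R: "norm z < R"
  shows "contour_integral (circlepath 0 R) (\<lambda>w. h w / (w - z))
       - contour_integral (circlepath 0 r) (\<lambda>w. h w / (w - z)) = 2 * of_real pi * \<i> * h z"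
proof -
  have z0: "z \<noteq> 0" using r by auto
  define \<phi> where "\<phi> = (\<lambda>w. if w = z then deriv h z else (h w - h z) / (w - z))"
  have "\<phi> holomorphic_on - {0}"
    unfolding \<phi>_def by (rule pole_lemma[OF h]) (use z0 in \<open>simp add: interior_open open_Compl\<close>)
  hence eq: "contour_integral (circlepath 0 R) \<phi> = contour_integral (circlepath 0 r) \<phi>"
    by (rule circ_indep) (use r R in auto)
  have R0: "0 < R" using r R by linarith
  have c1: "(\<lambda>w. h z / (w - z)) contour_integrable_on (circlepath 0 R)"
    by (rule cint_integrable[of "\<lambda>_. h z"]) (use R R0 in auto)
  have c2: "(\<lambda>w. h z / (w - z)) contour_integrable_on (circlepath 0 r)"
    by (rule cint_integrable[of "\<lambda>_. h z"]) (use r in auto)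
  have i1: "contour_integral (circlepath 0 R) (\<lambda>w. h z / (w - z)) = 2 * of_real pi * \<i> * h z"
    by (rule contour_integral_unique, rule Cauchy_integral_circlepath_simple) (use R in auto)
  have i2: "contour_integral (circlepath 0 r) (\<lambda>w. h z / (w - z)) = 0"
  proof (rule contour_integral_unique, rule Cauchy_theorem_convex_simple[where S = "ball 0 (norm z)"])
    show "(\<lambda>w. h z / (w - z)) holomorphic_on ball 0 (norm z)"
      by (intro holomorphic_intros) auto
  qed (use r in auto)
  have "contour_integral (circlepath 0 R) \<phi> = contour_integral (circlepath 0 R) (\<lambda>w. h w / (w - z) - h z / (w - z))"
    by (rule contour_integral_eq) (use R in \<open>auto simp: \<phi>_def diff_divide_distrib\<close>)
  also have "\<dots> = contour_integral (circlepath 0 R) (\<lambda>w. h w / (w - z)) - 2 * of_real pi * \<i> * h z"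
    by (subst contour_integral_diff[OF cint_integrable[OF h] c1]) (use R R0 i1 in auto)
  finally have A: "contour_integral (circlepath 0 R) \<phi> = contour_integral (circlepath 0 R) (\<lambda>w. h w / (w - z)) - 2 * of_real pi * \<i> * h z" .
  have "contour_integral (circlepath 0 r) \<phi> = contour_integral (circlepath 0 r) (\<lambda>w. h w / (w - z) - h z / (w - z))"
    by (rule contour_integral_eq) (use r in \<open>auto simp: \<phi>_def diff_divide_distrib\<close>)
  also have "\<dots> = contour_integral (circlepath 0 r) (\<lambda>w. h w / (w - z))"
    by (subst contour_integral_diff[OF cint_integrable[OF h] c2]) (use r i2 in auto)
  finally have B: "contour_integral (circlepath 0 r) \<phi> = contour_integral (circlepath 0 r) (\<lambda>w. h w / (w - z))" .
  have "contour_integral (circlepath 0 R) (\<lambda>w. h w / (w - z)) - 2 * of_real pi * \<i> * h z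
     = contour_integral (circlepath 0 r) (\<lambda>w. h w / (w - z))" using eq A B by simp
  thus ?thesis by (simp add: diff_eq_eq eq_diff_eq algebra_simps)
qed

lemma laurent_decomp:
  assumes h: "h holomorphic_on (- {0})"
  obtains P Q where "P holomorphic_on UNIV" "Q holomorphic_on UNIV"
    "\<And>z. z \<noteq> 0 \<Longrightarrow> h z = P z + Q (1 / z)"
proof -
  define P where "P z = Pp h z / (2 * of_real pi * \<i>)" for z
  define Q where "Q u = (if u = 0 then 0 else h (1 / u) - P (1 / u))" for u
  have Ph: "P holomorphic_on UNIV"
    unfolding P_def by (intro holomorphic_intros Pp_holo[OF h]) simp
  have "(\<lambda>u. (h \<circ> (\<lambda>u. 1 / u)) u - (P \<circ> (\<lambda>u. 1 / u)) u) holomorphic_on (- {0})"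
    by (intro holomorphic_intros holomorphic_on_compose_gen[OF _ h] holomorphic_on_compose_gen[OF _ Ph]) auto
  hence "(\<lambda>u. (h \<circ> (\<lambda>u. 1 / u)) u - (P \<circ> (\<lambda>u. 1 / u)) u) holomorphic_on (UNIV - {0})"
    by (simp add: Compl_eq_Diff_UNIV)
  hence Qh0: "Q holomorphic_on (UNIV - {0})"
    by (rule holomorphic_transform) (auto simp: Q_def)
  have "bounded (h ` sphere 0 1)"
    by (intro compact_imp_bounded compact_continuous_image continuous_on_subset[OF holomorphic_on_imp_continuous_on[OF h]]) auto
  then obtain B where B: "B > 0" "\<And>w. w \<in> sphere 0 1 \<Longrightarrow> norm (h w) \<le> B"
    by (auto simp: bounded_pos)
  have bnd: "norm (Q u) \<le> 2 * B * norm u" if u: "u \<noteq> 0" "norm u < 1/2" for u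
  proof -
    define z where "z = 1 / u"
    have nz: "norm z > 2" using u by (simp add: z_def norm_divide divide_simps)
    have "contour_integral (circlepath 0 (norm z + 1)) (\<lambda>w. h w / (w - z))
       - contour_integral (circlepath 0 1) (\<lambda>w. h w / (w - z)) = 2 * of_real pi * \<i> * h z"
      by (rule annulus_formula[OF h]) (use nz in auto)
    hence "Pp h z = contour_integral (circlepath 0 1) (\<lambda>w. h w / (w - z)) + 2 * of_real pi * \<i> * h z"
      unfolding Pp_def by (simp add: algebra_simps)
    hence QI: "Q u = - contour_integral (circlepath 0 1) (\<lambda>w. h w / (w - z)) / (2 * of_real pi * \<i>)"
      using u by (simp add: Q_def P_def z_def[symmetric] field_simps)
    have "norm (contour_integral (circlepath 0 1) (\<lambda>w. h w / (w - z))) \<le> B / (norm z - 1) * (2 * pi * 1)"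
    proof (rule has_contour_integral_bound_circlepath[OF has_contour_integral_integral[OF cint_integrable[OF h]]])
      show "B / (norm z - 1) \<ge> 0" using B nz by simp
      fix x :: complex assume x: "norm (x - 0) = 1"
      have "norm z - 1 \<le> norm (x - z)" using x norm_triangle_ineq2[of z x] by (simp add: norm_minus_commute)
      moreover have "norm (h x) \<le> B" using B x by auto
      ultimately show "norm (h x / (x - z)) \<le> B / (norm z - 1)"
        using nz B by (simp add: norm_divide frac_le)
    qed (use nz in auto)
    hence "norm (contour_integral (circlepath 0 1) (\<lambda>w. h w / (w - z))) / (2 * pi) \<le> B / (norm z - 1)"
      using nz by (simp add: divide_simps)
    hence "norm (Q u) \<le> B / (norm z - 1)"
      by (simp add: QI norm_divide norm_mult)
    also have "\<dots> \<le> B / (norm z / 2)" using nz B by (intro divide_left_mono) (auto intro!: mult_pos_pos)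
    also have "\<dots> = 2 * B * norm u" using u by (simp add: z_def norm_divide field_simps)
    finally show ?thesis .
  qed
  have "(Q \<longlongrightarrow> 0) (at 0)"
  proof (rule Lim_null_comparison[where g = "\<lambda>u. 2 * B * norm u"])
    show "\<forall>\<^sub>F x in at 0. norm (Q x) \<le> 2 * B * norm x"
      unfolding eventually_at by (intro exI[of _ "1/2"]) (auto intro: bnd simp: dist_norm)
    show "((\<lambda>u. 2 * B * norm u) \<longlongrightarrow> 0) (at (0::complex))"
      by (auto intro!: tendsto_eq_intros)
  qed
  hence lim: "(Q \<longlongrightarrow> Q 0) (at 0 within UNIV)" by (simp add: Q_def)
  have Qh: "Q holomorphic_on UNIV"
    by (rule no_isolated_singularity'[of "{0}"]) (use lim Qh0 in auto)
  show ?thesis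
    by (rule that[OF Ph Qh]) (simp add: Q_def)
qed

lemma powr_le_exp_pow:
  assumes "L > 0" "n > 0"
  shows "real n powr L \<le> exp L ^ n"
proof -
  have "real n powr L = exp (L * ln (real n))" using assms by (simp add: powr_def)
  also have "\<dots> \<le> exp (real n * L)"
    using assms ln_less_self[of "real n"] by (simp add: mult.commute mult_left_mono less_imp_le)
  also have "\<dots> = exp L ^ n" by (rule exp_of_nat_mult)
  finally show ?thesis .
qed

lemma entire_coh:
  fixes q :: complex
  assumes P: "P holomorphic_on UNIV" and C: "C > 0" and L: "L > 0"
    and dio: "\<And>n::nat. n > 0 \<Longrightarrow> C * real n powr (- L) \<le> cmod (q ^ n - 1)"
  obtains G where "G holomorphic_on UNIV" "\<And>z. G (q * z) - G z = P z - P 0"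
proof -
  define c where "c n = (deriv ^^ n) P 0 / fact n" for n
  have Ps: "(\<lambda>n. c n * z ^ n) sums P z" for z
    using holomorphic_power_series[OF holomorphic_on_subset[OF P], of 0 "norm z + 1" z]
    by (simp add: c_def)
  define \<alpha> where "\<alpha> n = (if n = 0 then 0 else c n / (q ^ n - 1))" for n
  have qn: "q ^ n - 1 \<noteq> 0" if "n > 0" for n
  proof -
    have "C * real n powr (- L) > 0" using C that by simp
    thus ?thesis using dio[OF that] by auto
  qed
  have inv_bd: "1 / cmod (q ^ n - 1) \<le> exp L ^ n / C" if "n > 0" for n
  proof -
    have pos: "C * real n powr (- L) > 0" using C that by simp
    have "1 / cmod (q ^ n - 1) \<le> 1 / (C * real n powr (- L))"
      using dio[OF that] pos by (intro divide_left_mono) (auto intro!: mult_pos_pos)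
    also have "\<dots> = real n powr L / C" using that by (simp add: powr_minus field_simps)
    also have "\<dots> \<le> exp L ^ n / C" using powr_le_exp_pow[OF L that] C by (simp add: divide_right_mono)
    finally show ?thesis .
  qed
  have sa: "summable (\<lambda>n. \<alpha> n * z ^ n)" for z
  proof -
    define w where "w = of_real (exp L) * z"
    define x :: complex where "x = of_real (norm w + 1)"
    have "summable (\<lambda>n. norm (c n * w ^ n))"
      by (rule powser_insidea[OF sums_summable[OF Ps[of x]]]) (simp add: x_def)
    hence "summable (\<lambda>n. norm (c n * w ^ n) / C)" by (rule summable_divide)
    moreover have "norm (\<alpha> n * z ^ n) \<le> norm (c n * w ^ n) / C" for n
    proof (cases "n = 0")
      case True thus ?thesis using C by (simp add: \<alpha>_def)
    next
      case False
      hence "norm (\<alpha> n * z ^ n) = norm (c n) * norm z ^ n * (1 / cmod (q ^ n - 1))"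
        by (simp add: \<alpha>_def norm_mult norm_divide norm_power)
      also have "\<dots> \<le> norm (c n) * norm z ^ n * (exp L ^ n / C)"
        using inv_bd[of n] False by (intro mult_left_mono) auto
      also have "\<dots> = norm (c n * w ^ n) / C"
        by (simp add: w_def norm_mult norm_power power_mult_distrib)
      finally show ?thesis .
    qed
    ultimately show ?thesis
      using summable_comparison_test_ev[of "\<lambda>n. \<alpha> n * z ^ n" "\<lambda>n. norm (c n * w ^ n) / C"] by auto
  qed
  define G where "G z = (suminf (\<lambda>n. \<alpha> n * z ^ n))" for z
  have Gh: "G holomorphic_on UNIV"
  proof -
    have "(G has_field_derivative (suminf (\<lambda>n. diffs \<alpha> n * z ^ n))) (at z)" for z
    proof -
      have "ereal (norm (of_real (norm z + 1) :: complex)) \<le> conv_radius \<alpha>"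
        by (rule conv_radius_geI[OF sa])
      moreover have "norm (of_real (norm z + 1) :: complex) = norm z + 1"
        by (simp add: abs_of_nonneg)
      moreover have "ereal (norm z) < ereal (norm z + 1)" by simp
      ultimately have "ereal (norm z) < conv_radius \<alpha>"
        by (metis order_less_le_trans)
      thus ?thesis unfolding G_def by (rule has_field_derivative_powser)
    qed
    thus ?thesis by (auto simp: holomorphic_on_def field_differentiable_def)
  qed
  have "G (q * z) - G z = P z - P 0" for z
  proof -
    have "(\<lambda>n. \<alpha> n * (q * z) ^ n - \<alpha> n * z ^ n) sums (G (q * z) - G z)"
      unfolding G_def by (intro sums_diff summable_sums sa)
    moreover have "(\<lambda>n. c n * z ^ n - (if n = 0 then c n * z ^ n else 0)) sums (P z - c 0)"
      using sums_diff[OF Ps sums_single[of 0 "\<lambda>n. c n * z ^ n"]] by simp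
    moreover have "\<alpha> n * (q * z) ^ n - \<alpha> n * z ^ n = c n * z ^ n - (if n = 0 then c n * z ^ n else 0)" for n
    proof (cases "n = 0")
      case False
      have "\<alpha> n * (q * z) ^ n - \<alpha> n * z ^ n = (c n / (q ^ n - 1)) * (q ^ n - 1) * z ^ n"
        using False by (simp add: \<alpha>_def power_mult_distrib algebra_simps add_divide_distrib[symmetric])
      also have "\<dots> = c n * z ^ n" using qn[of n] False by simp
      finally show ?thesis using False by simp
    qed (simp add: \<alpha>_def)
    ultimately have "G (q * z) - G z = P z - c 0" using sums_unique2 by simp
    thus ?thesis by (simp add: c_def)
  qed
  thus ?thesis using that Gh by blast
qed

lemma coh:
  fixes q :: complex
  assumes h: "h holomorphic_on (- {0})" and q: "norm q = 1" and C: "C > 0" and L: "L > 0"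
    and dio: "\<forall>n::int. n \<noteq> 0 \<longrightarrow> cmod (q powi n - 1) \<ge> C * \<bar>real_of_int n\<bar> powr (- L)"
  obtains h0 g where "g holomorphic_on (- {0})" "\<And>z. z \<noteq> 0 \<Longrightarrow> g (q * z) - g z = h z - h0"
proof -
  have q0: "q \<noteq> 0" using q by auto
  obtain P Q where P: "P holomorphic_on UNIV" and Q: "Q holomorphic_on UNIV"
    and hPQ: "\<And>z. z \<noteq> 0 \<Longrightarrow> h z = P z + Q (1 / z)"
    using laurent_decomp[OF h] by blast
  have d1: "C * real n powr (- L) \<le> cmod (q ^ n - 1)" if "n > 0" for n :: nat
    using dio[rule_format, of "int n"] that by simp
  have d2: "C * real n powr (- L) \<le> cmod (inverse q ^ n - 1)" if "n > 0" for n :: nat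
  proof -
    have "q powi (- int n) = inverse q ^ n" by (simp add: power_int_minus power_inverse)
    thus ?thesis using dio[rule_format, of "- int n"] that by simp
  qed
  obtain G1 where G1: "G1 holomorphic_on UNIV" "\<And>z. G1 (q * z) - G1 z = P z - P 0"
    using entire_coh[OF P C L d1] by blast
  obtain G2 where G2: "G2 holomorphic_on UNIV" "\<And>z. G2 (inverse q * z) - G2 z = Q z - Q 0"
    using entire_coh[OF Q C L d2] by blast
  define g where "g = (\<lambda>z. G1 z + G2 (1 / z))" 
  have "(\<lambda>z. G1 z + (G2 \<circ> (\<lambda>z. 1 / z)) z) holomorphic_on (- {0})"
    by (intro holomorphic_intros holomorphic_on_subset[OF G1(1)]
        holomorphic_on_compose_gen[OF _ G2(1)]) auto
  hence gh: "g holomorphic_on (- {0})" by (simp add: g_def o_def)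
  have "g (q * z) - g z = h z - (P 0 + Q 0)" if z: "z \<noteq> 0" for z
  proof -
    have "1 / (q * z) = inverse q * (1 / z)" by (simp add: field_simps)
    hence "g (q * z) - g z = (G1 (q * z) - G1 z) + (G2 (inverse q * (1 / z)) - G2 (1 / z))"
      by (simp add: g_def)
    also have "\<dots> = (P z - P 0) + (Q (1 / z) - Q 0)" by (simp only: G1(2) G2(2))
    also have "\<dots> = h z - (P 0 + Q 0)" using hPQ[OF z] by simp
    finally show ?thesis .
  qed
  thus ?thesis using that gh by blast
qed

lemma exp_const_constant:
  fixes f :: "'a::topological_space \<Rightarrow> complex"
  assumes S: "connected S" and cf: "continuous_on S f"
    and e: "\<And>x y. x \<in> S \<Longrightarrow> y \<in> S \<Longrightarrow> exp (f x) = exp (f y)"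
    and x: "x \<in> S" and y: "y \<in> S"
  shows "f x = f y"
proof -
  have "f constant_on S"
  proof (rule continuous_discrete_range_constant[OF S cf])
    fix x assume x: "x \<in> S"
    show "\<exists>e>0. \<forall>y. y \<in> S \<and> f y \<noteq> f x \<longrightarrow> e \<le> norm (f y - f x)"
    proof (intro exI[of _ "2 * pi"] conjI allI impI)
      fix y assume y: "y \<in> S \<and> f y \<noteq> f x"
      then obtain n :: int where n: "f y = f x + (of_int (2 * n) * pi) * \<i>"
        using e[of y x] x by (auto simp: exp_eq)
      hence "n \<noteq> 0" using y by auto
      hence "1 \<le> \<bar>real_of_int n\<bar>" by linarith
      hence "2 * pi * 1 \<le> 2 * pi * \<bar>real_of_int n\<bar>" by (intro mult_left_mono) auto
      moreover have "norm (f y - f x) = 2 * pi * \<bar>real_of_int n\<bar>"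
        using n by (simp add: norm_mult abs_mult)
      ultimately show "2 * pi \<le> norm (f y - f x)" by simp
    qed simp
  qed
  thus ?thesis using x y by (auto simp: constant_on_def)
qed

lemma exp_Ln_int: "z \<noteq> 0 \<Longrightarrow> exp (of_int m * Ln z) = z powi m"
  using complex_powr_of_int[of z m] by (simp add: powr_def mult.commute)

lemma structure_unit:
  fixes a :: "complex \<Rightarrow> complex"
  assumes a: "a holomorphic_on (- {0})" and nz: "\<And>z. z \<noteq> 0 \<Longrightarrow> a z \<noteq> 0"
  obtains m :: int and h where "h holomorphic_on (- {0})" "\<And>z. z \<noteq> 0 \<Longrightarrow> a z = z powi m * exp (h z)"
proof -
  have Ah: "(a \<circ> exp) holomorphic_on UNIV"
    by (rule holomorphic_on_compose_gen[OF _ a]) (auto intro: holomorphic_intros)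
  obtain H where Hh: "H holomorphic_on UNIV" and He: "\<And>w. exp (H w) = a (exp w)"
    using holomorphic_logarithm_exists[of UNIV "a \<circ> exp" 0] Ah nz by auto
  define D where "D w = H (w + 2 * of_real pi * \<i>) - H w" for w
  have cH: "continuous_on UNIV H" using Hh holomorphic_on_imp_continuous_on by blast
  have Dc: "continuous_on UNIV D" unfolding D_def
    by (intro continuous_on_diff cH continuous_on_compose2[OF cH] continuous_intros) auto
  have eD: "exp (D w) = 1" for w
  proof -
    have "exp (w + 2 * of_real pi * \<i>) = exp w" by (simp add: exp_add)
    thus ?thesis using He[of w] He[of "w + 2 * of_real pi * \<i>"] nz[of "exp w"]
      by (simp add: D_def exp_diff)
  qed
  have "D w = D 0" for w
    by (rule exp_const_constant[OF connected_UNIV Dc]) (auto simp: eD)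
  moreover obtain n :: int where "D 0 = of_int (2 * n) * pi * \<i>"
    using eD[of 0] exp_eq[of "D 0" 0] by auto
  ultimately have HD: "H (w + 2 * of_real pi * \<i>) = H w + 2 * of_real pi * \<i> * of_int n" for w
    by (simp add: D_def algebra_simps)
  define G where "G w = H w - of_int n * w" for w
  have Gp1: "G (w + 2 * of_real pi * \<i>) = G w" for w
    using HD[of w] by (simp add: G_def algebra_simps)
  define c where "c = 2 * complex_of_real pi * \<i>"
  have Gp1': "G (w + c) = G w" for w using Gp1 by (simp add: c_def)
  have Gpn: "G (w + of_nat k * c) = G w" for w k
  proof (induction k)
    case (Suc k)
    have "w + of_nat (Suc k) * c = (w + of_nat k * c) + c"
      by (simp add: algebra_simps)
    hence "G (w + of_nat (Suc k) * c) = G (w + of_nat k * c)" by (simp only: Gp1')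
    thus ?case using Suc.IH by simp
  qed simp
  have Gpi: "G (w + of_int k * c) = G w" for w k
  proof (cases "k \<ge> 0")
    case True
    hence e: "(of_nat (nat k) :: complex) = of_int k" by (rule of_nat_nat)
    show ?thesis using Gpn[of w "nat k"] unfolding e .
  next
    case False
    hence e: "(of_nat (nat (- k)) :: complex) = - of_int k" by simp
    have "w = (w + of_int k * c) + of_nat (nat (- k)) * c"
      unfolding e by (simp add: algebra_simps)
    hence "G w = G ((w + of_int k * c) + of_nat (nat (- k)) * c)" by (rule arg_cong)
    also have "\<dots> = G (w + of_int k * c)" by (rule Gpn)
    finally show ?thesis by simp
  qed
  have Gl: "G u = G v" if ee: "exp u = exp v" for u v
  proof -
    obtain k :: int where "u = v + (of_int (2 * k) * pi) * \<i>" using exp_eq[THEN iffD1, OF ee] by blast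
    hence "u = v + of_int k * c" by (simp add: algebra_simps c_def)
    thus ?thesis using Gpi by simp
  qed
  have Gh: "G holomorphic_on UNIV" unfolding G_def by (intro holomorphic_intros Hh)
  define h where "h z = G (Ln z)" for z
  have hd: "h field_differentiable at z0" if z0: "z0 \<noteq> 0" for z0
  proof -
    define lg where "lg = (\<lambda>z. Ln (z / z0) + Ln z0)" 
    have sub: "z / z0 \<in> ball 1 1" if "z \<in> ball z0 (norm z0)" for z
    proof -
      have "norm (z / z0 - 1) = norm ((z - z0) / z0)" using z0 by (simp add: field_simps)
      also have "\<dots> < 1" using that z0 by (simp add: norm_divide dist_norm norm_minus_commute divide_simps)
      finally show ?thesis by (simp add: dist_norm norm_minus_commute)
    qed
    have nneg: "w \<notin> \<real>\<^sub>\<le>\<^sub>0" if "w \<in> ball 1 1" for w :: complex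
    proof
      assume "w \<in> \<real>\<^sub>\<le>\<^sub>0"
      then obtain r where "w = of_real r" "r \<le> 0" by (auto simp: nonpos_Reals_def)
      moreover have "norm (1 - complex_of_real r) = \<bar>1 - r\<bar>"
        by (metis norm_of_real of_real_1 of_real_diff)
      ultimately show False using that by (simp add: dist_norm)
    qed
    have "(Ln \<circ> (\<lambda>z. z / z0)) holomorphic_on ball z0 (norm z0)"
      by (rule holomorphic_on_compose_gen[where t = "ball 1 1"])
         (use sub nneg z0 in \<open>auto intro!: holomorphic_intros\<close>)
    hence "(\<lambda>z. (Ln \<circ> (\<lambda>z. z / z0)) z + Ln z0) holomorphic_on ball z0 (norm z0)"
      by (intro holomorphic_on_add holomorphic_on_const)
    hence "lg holomorphic_on ball z0 (norm z0)"
      by (simp add: lg_def o_def)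
    hence "(G \<circ> lg) holomorphic_on ball z0 (norm z0)"
      by (rule holomorphic_on_compose_gen[OF _ Gh]) auto
    moreover have "(G \<circ> lg) z = h z" if "z \<in> ball z0 (norm z0)" for z
    proof -
      have "z \<noteq> 0" using that by (auto simp: dist_norm)
      hence "exp (lg z) = exp (Ln z)" using z0 by (simp add: lg_def exp_add)
      thus ?thesis unfolding h_def o_def by (rule Gl)
    qed
    ultimately have "h holomorphic_on ball z0 (norm z0)" by (rule holomorphic_transform)
    thus ?thesis using z0 holomorphic_on_imp_differentiable_at[of h "ball z0 (norm z0)" z0] by simp
  qed
  have hh: "h holomorphic_on (- {0})"
    using hd by (auto simp: holomorphic_on_def field_differentiable_at_within)
  have "a z = z powi n * exp (h z)" if "z \<noteq> 0" for z
  proof -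
    have "a z = exp (H (Ln z))" using He[of "Ln z"] that by simp
    also have "H (Ln z) = h z + of_int n * Ln z" by (simp add: h_def G_def)
    also have "exp (h z + of_int n * Ln z) = z powi n * exp (h z)"
      using that by (simp add: exp_add exp_Ln_int)
    finally show ?thesis .
  qed
  thus ?thesis using that hh by blast
qed

lemma exp_int_mult: "exp (of_int k * x) = exp x powi k" for x :: complex
proof (cases "k \<ge> 0")
  case True
  have "exp (of_int k * x) = exp (of_nat (nat k) * x)" using True by simp
  also have "\<dots> = exp x ^ nat k" by (rule exp_of_nat_mult)
  finally show ?thesis using True by (simp add: power_int_def)
next
  case False
  hence "(of_int k :: complex) = - of_nat (nat (- k))" by simp
  hence "exp (of_int k * x) = inverse (exp x ^ nat (- k))"
    by (simp add: exp_minus exp_of_nat_mult)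
  thus ?thesis using False by (simp add: power_int_def power_inverse)
qed

lemma uniq_deg:
  assumes h: "h holomorphic_on (- {0})" and e: "\<And>z. z \<noteq> 0 \<Longrightarrow> z powi k = exp (h z)"
  shows "k = 0"
proof -
  define f where "f t = h (exp (\<i> * of_real t)) - \<i> * of_int k * of_real t" for t :: real
  have cf: "continuous_on UNIV f" unfolding f_def
    by (intro continuous_intros continuous_on_compose2[OF holomorphic_on_imp_continuous_on[OF h]]) auto
  have ef: "exp (f t) = 1" for t
  proof -
    have "exp (h (exp (\<i> * of_real t))) = exp (\<i> * of_real t) powi k" using e[of "exp (\<i> * of_real t)"] by simp
    also have "\<dots> = exp (of_int k * (\<i> * of_real t))" by (rule exp_int_mult[symmetric])
    finally show ?thesis by (simp add: f_def exp_diff mult_ac)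
  qed
  have "f 0 = f (2 * pi)"
    by (rule exp_const_constant[OF connected_UNIV cf]) (auto simp: ef)
  moreover have "exp (\<i> * of_real (2 * pi)) = exp (2 * of_real pi * \<i>)" by (simp add: mult_ac)
  hence "exp (\<i> * of_real (2 * pi)) = 1" by (simp only: exp_two_pi_i)
  ultimately have "\<i> * of_int k * of_real (2 * pi) = 0" by (simp add: f_def)
  thus ?thesis by simp
qed

lemma shift_const:
  fixes q :: complex
  assumes h: "h holomorphic_on (- {0})" and q: "norm q = 1"
    and e: "\<And>z. z \<noteq> 0 \<Longrightarrow> exp (h z - h (q * z)) = \<kappa>"
  shows "\<kappa> = 1"
proof -
  have q0: "q \<noteq> 0" using q by auto
  define D where "D z = h z - h (q * z)" for z
  have ch: "continuous_on (- {0}) h" using h holomorphic_on_imp_continuous_on by blast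
  have cD: "continuous_on (- {0}) D" unfolding D_def
    by (intro continuous_on_diff ch continuous_on_compose2[OF ch] continuous_intros) (auto simp: q0)
  have eD: "exp (D z) = \<kappa>" if "z \<noteq> 0" for z using e[OF that] by (simp add: D_def)
  have conn: "connected (- {0::complex})" by (rule connected_punctured_universe) simp
  have Dc: "D z = D 1" if "z \<noteq> 0" for z
  proof (rule exp_const_constant[OF conn cD])
    fix x y :: complex assume "x \<in> - {0}" "y \<in> - {0}"
    thus "exp (D x) = exp (D y)" using eD by simp
  qed (use that in auto)
  define k where "k = D 1"
  have hq: "h (q ^ N) = h 1 - of_nat N * k" for N
  proof (induction N)
    case (Suc N)
    have "q ^ N \<noteq> 0" using q0 by simp
    hence "D (q ^ N) = k" unfolding k_def by (rule Dc)
    hence "h (q ^ Suc N) = h (q ^ N) - k" by (simp add: D_def algebra_simps)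
    thus ?case using Suc.IH by (simp add: algebra_simps)
  qed simp
  have "bounded (h ` sphere 0 1)"
    by (intro compact_imp_bounded compact_continuous_image continuous_on_subset[OF ch]) auto
  then obtain B where B: "B > 0" "\<And>w. w \<in> sphere 0 1 \<Longrightarrow> norm (h w) \<le> B"
    by (auto simp: bounded_pos)
  have bN: "real N * norm k \<le> 2 * B" for N
  proof -
    have "norm (q ^ N) = 1" using q by (simp add: norm_power)
    hence "norm (h (q ^ N)) \<le> B" "norm (h 1) \<le> B" using B by auto
    moreover have "of_nat N * k = h 1 - h (q ^ N)" using hq[of N] by simp
    ultimately have "norm (of_nat N * k) \<le> 2 * B"
      using norm_triangle_ineq4[of "h 1" "h (q ^ N)"] by simp
    thus ?thesis by (simp add: norm_mult)
  qed
  have "k = 0"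
  proof (rule ccontr)
    assume "k \<noteq> 0"
    hence nk: "norm k > 0" by simp
    obtain N :: nat where "real N > 2 * B / norm k" using reals_Archimedean2 by blast
    hence "real N * norm k > 2 * B" using nk by (simp add: field_simps)
    thus False using bN[of N] by simp
  qed
  thus ?thesis using e[of 1] by (simp add: D_def k_def)
qed

lemma Ohol_iff: "f \<in> Ohol \<longleftrightarrow> f holomorphic_on (- {0}) \<and> f 0 = 0"
  by (simp add: Ohol_def)

lemma Ohol_if0: "F holomorphic_on (- {0}) \<Longrightarrow> (\<lambda>z. if z = 0 then 0 else F z) \<in> Ohol"
proof -
  assume F: "F holomorphic_on (- {0})"
  have "(\<lambda>z. if z = 0 then 0 else F z) holomorphic_on (- {0})"
    by (rule holomorphic_transform[OF F]) auto
  thus ?thesis by (simp add: Ohol_iff)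
qed

lemma Ohol_mult: "f \<in> Ohol \<Longrightarrow> g \<in> Ohol \<Longrightarrow> (\<lambda>z. f z * g z) \<in> Ohol"
  unfolding Ohol_iff by (auto intro: holomorphic_intros)

lemma Ohol_add: "f \<in> Ohol \<Longrightarrow> g \<in> Ohol \<Longrightarrow> (\<lambda>z. f z + g z) \<in> Ohol"
  unfolding Ohol_iff by (auto intro: holomorphic_intros)

lemma holo_shift:
  assumes q: "(q::complex) \<noteq> 0" and f: "f holomorphic_on (- {0})"
  shows "(\<lambda>z. f (q * z)) holomorphic_on (- {0})"
proof -
  have "(\<lambda>z. q * z) holomorphic_on (- {0})" by (intro holomorphic_intros)
  moreover have "(\<lambda>z. q * z) ` (- {0}) \<subseteq> - {0}" using q by auto
  ultimately have "(f \<circ> (\<lambda>z. q * z)) holomorphic_on (- {0})"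
    by (rule holomorphic_on_compose_gen[OF _ f])
  thus ?thesis by (simp add: o_def)
qed

lemma Ohol_shift: "(q::complex) \<noteq> 0 \<Longrightarrow> f \<in> Ohol \<Longrightarrow> (\<lambda>z. f (q * z)) \<in> Ohol"
  unfolding Ohol_iff using holo_shift by auto

lemma one_O_Ohol: "one_O \<in> Ohol"
proof -
  have "(\<lambda>z. if z = 0 then 0 else (\<lambda>_. 1::complex) z) \<in> Ohol"
    by (rule Ohol_if0) (auto intro: holomorphic_intros)
  thus ?thesis by (simp add: one_O_def)
qed

lemma Ohol_0: "f \<in> Ohol \<Longrightarrow> f 0 = 0"
  by (simp add: Ohol_def)

lemma Ohol_one: "f \<in> Ohol \<Longrightarrow> (\<lambda>z. f z * one_O z) = f"
  by (auto simp: one_O_def fun_eq_iff Ohol_0)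

lemma one_O_shift: "(q::complex) \<noteq> 0 \<Longrightarrow> one_O (q * z) = one_O z"
  by (simp add: one_O_def)

definition U :: "(complex \<Rightarrow> complex) set" where
  "U = {a \<in> Ohol. \<forall>z. z \<noteq> 0 \<longrightarrow> a z \<noteq> 0}"

definition invU :: "(complex \<Rightarrow> complex) \<Rightarrow> complex \<Rightarrow> complex" where
  "invU a = (\<lambda>z. if z = 0 then 0 else 1 / a z)"

definition mulU :: "(complex \<Rightarrow> complex) \<Rightarrow> (complex \<Rightarrow> complex) \<Rightarrow> complex \<Rightarrow> complex" where
  "mulU a b = (\<lambda>z. a z * b z)"

lemma U_Ohol: "a \<in> U \<Longrightarrow> a \<in> Ohol" by (simp add: U_def)
lemma U_nz: "a \<in> U \<Longrightarrow> z \<noteq> 0 \<Longrightarrow> a z \<noteq> 0" by (simp add: U_def)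
lemma U_holo: "a \<in> U \<Longrightarrow> a holomorphic_on (- {0})" by (simp add: U_def Ohol_def)

lemma invU_U: "a \<in> U \<Longrightarrow> invU a \<in> U"
proof -
  assume a: "a \<in> U"
  have "(\<lambda>z. 1 / a z) holomorphic_on (- {0})"
    using a by (intro holomorphic_intros U_holo) (auto simp: U_nz)
  hence "invU a \<in> Ohol" unfolding invU_def by (rule Ohol_if0)
  thus ?thesis using a by (auto simp: U_def invU_def)
qed

lemma mulU_U: "a \<in> U \<Longrightarrow> b \<in> U \<Longrightarrow> mulU a b \<in> U"
  by (auto simp: U_def mulU_def intro: Ohol_mult)

lemma mulU_invU: "a \<in> U \<Longrightarrow> mulU (invU a) a = one_O"
  by (auto simp: mulU_def invU_def one_O_def fun_eq_iff U_nz)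

lemma one_O_U: "one_O \<in> U"
  using one_O_Ohol by (simp add: U_def one_O_def)

lemma mulU_one: "a \<in> U \<Longrightarrow> mulU one_O a = a"
  using Ohol_one[of a] by (auto simp: mulU_def U_def fun_eq_iff mult.commute)

lemma mulU_assoc: "mulU (mulU a b) c = mulU a (mulU b c)"
  by (simp add: mulU_def mult.assoc)

lemma mulU_comm: "mulU a b = mulU b a"
  by (simp add: mulU_def mult.commute)

definition PhiA :: "complex \<Rightarrow> (complex \<Rightarrow> complex) \<Rightarrow> (complex \<Rightarrow> complex) \<Rightarrow> complex \<Rightarrow> complex" where
  "PhiA q a = (\<lambda>f z. f (q * z) * a z)"

lemma PhiA_one: "q \<noteq> 0 \<Longrightarrow> a \<in> Ohol \<Longrightarrow> PhiA q a one_O = a"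
  by (auto simp: PhiA_def one_O_def fun_eq_iff Ohol_0)

lemma rank1_fwd:
  assumes q: "q \<noteq> 0" and r: "rank1_obj q \<Phi>"
  shows "\<Phi> one_O \<in> U" "\<And>f. f \<in> Ohol \<Longrightarrow> \<Phi> f = PhiA q (\<Phi> one_O) f"
proof -
  have bij: "bij_betw \<Phi> Ohol Ohol"
    and mul: "\<And>f g. f \<in> Ohol \<Longrightarrow> g \<in> Ohol \<Longrightarrow> \<Phi> (\<lambda>z. f z * g z) = (\<lambda>z. qshift q f z * \<Phi> g z)"
    using r by (auto simp: rank1_obj_def)
  show eq: "\<Phi> f = PhiA q (\<Phi> one_O) f" if f: "f \<in> Ohol" for f
  proof -
    have "\<Phi> f = \<Phi> (\<lambda>z. f z * one_O z)" using Ohol_one[OF f] by simp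
    also have "\<dots> = PhiA q (\<Phi> one_O) f"
      using mul[OF f one_O_Ohol] by (simp add: PhiA_def qshift_def)
    finally show ?thesis .
  qed
  have aO: "\<Phi> one_O \<in> Ohol" using bij one_O_Ohol by (auto simp: bij_betw_def)
  obtain g where g: "g \<in> Ohol" "\<Phi> g = one_O"
    using bij one_O_Ohol by (metis bij_betw_iff_bijections)
  have "\<Phi> one_O z \<noteq> 0" if "z \<noteq> 0" for z
  proof -
    have "one_O z = g (q * z) * \<Phi> one_O z"
      using eq[OF g(1)] g(2) by (simp add: PhiA_def fun_eq_iff)
    thus ?thesis using that by (auto simp: one_O_def)
  qed
  thus "\<Phi> one_O \<in> U" using aO by (simp add: U_def)
qed

lemma rank1_bwd:
  assumes q: "q \<noteq> 0" and a: "a \<in> U" and eq: "\<And>f. f \<in> Ohol \<Longrightarrow> \<Phi> f = PhiA q a f"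
  shows "rank1_obj q \<Phi>"
proof -
  have aO: "a \<in> Ohol" using a by (simp add: U_def)
  have into: "\<Phi> f \<in> Ohol" if "f \<in> Ohol" for f
    using eq[OF that] Ohol_mult[OF Ohol_shift[OF q that] aO] by (simp add: PhiA_def)
  have inj: "inj_on \<Phi> Ohol"
  proof (rule inj_onI)
    fix f g assume f: "f \<in> Ohol" and g: "g \<in> Ohol" and e: "\<Phi> f = \<Phi> g"
    have "f w = g w" for w
    proof (cases "w = 0")
      case True thus ?thesis using f g by (simp add: Ohol_0)
    next
      case False
      have "PhiA q a f (w / q) = PhiA q a g (w / q)"
        using e eq[OF f] eq[OF g] by simp
      hence "f (q * (w / q)) * a (w / q) = g (q * (w / q)) * a (w / q)"
        by (simp only: PhiA_def)
      moreover have "a (w / q) \<noteq> 0" using False q a by (simp add: U_nz)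
      ultimately have "f (q * (w / q)) = g (q * (w / q))" by simp
      moreover have "q * (w / q) = w" using q by simp
      ultimately show ?thesis by simp
    qed
    thus "f = g" by auto
  qed
  have surj: "g \<in> \<Phi> ` Ohol" if g: "g \<in> Ohol" for g
  proof -
    define f where "f = (\<lambda>w. if w = 0 then 0 else g (w / q) / a (w / q))"
    have "(\<lambda>w. g (inverse q * w) / a (inverse q * w)) holomorphic_on (- {0})"
      using g a q by (intro holomorphic_intros holo_shift) (auto simp: Ohol_iff U_holo U_nz)
    hence "f \<in> Ohol" unfolding f_def by (intro Ohol_if0) (simp add: divide_inverse mult.commute)
    moreover have "\<Phi> f = g"
    proof -
      have "PhiA q a f z = g z" for z
        using q g a by (cases "z = 0") (auto simp: PhiA_def f_def Ohol_0 U_nz)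
      thus ?thesis using eq[OF \<open>f \<in> Ohol\<close>] by auto
    qed
    ultimately show ?thesis by blast
  qed
  have bij: "bij_betw \<Phi> Ohol Ohol"
    unfolding bij_betw_def using inj into surj by blast
  have add: "\<Phi> (\<lambda>z. f z + g z) = (\<lambda>z. \<Phi> f z + \<Phi> g z)" if "f \<in> Ohol" "g \<in> Ohol" for f g
    using eq[OF Ohol_add[OF that]] eq[OF that(1)] eq[OF that(2)] by (simp add: PhiA_def algebra_simps)
  have mul: "\<Phi> (\<lambda>z. f z * g z) = (\<lambda>z. qshift q f z * \<Phi> g z)" if "f \<in> Ohol" "g \<in> Ohol" for f g
    using eq[OF Ohol_mult[OF that]] eq[OF that(2)] by (simp add: PhiA_def qshift_def mult_ac)
  show ?thesis unfolding rank1_obj_def using bij add mul by blast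
qed

definition relU :: "complex \<Rightarrow> (complex \<Rightarrow> complex) \<Rightarrow> (complex \<Rightarrow> complex) \<Rightarrow> bool" where
  "relU q a a' \<longleftrightarrow> (\<exists>b\<in>U. \<forall>z. a' z * b (q * z) = a z * b z)"

lemma iso_fwd:
  assumes q: "q \<noteq> 0" and r1: "rank1_obj q \<Phi>" and r2: "rank1_obj q \<Psi>" and iso: "obj_iso \<Phi> \<Psi>"
  shows "relU q (\<Phi> one_O) (\<Psi> one_O)"
proof -
  obtain T where bij: "bij_betw T Ohol Ohol"
    and mul: "\<And>f g. f \<in> Ohol \<Longrightarrow> g \<in> Ohol \<Longrightarrow> T (\<lambda>z. f z * g z) = (\<lambda>z. f z * T g z)"
    and com: "\<And>f. f \<in> Ohol \<Longrightarrow> T (\<Phi> f) = \<Psi> (T f)"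
    using iso unfolding obj_iso_def by blast
  define b where "b = T one_O"
  have Teq: "T g = (\<lambda>z. g z * b z)" if g: "g \<in> Ohol" for g
    using mul[OF g one_O_Ohol] Ohol_one[OF g] by (simp add: b_def)
  have bO: "b \<in> Ohol" using bij one_O_Ohol by (auto simp: bij_betw_def b_def)
  obtain g where g: "g \<in> Ohol" "T g = one_O"
    using bij one_O_Ohol by (metis bij_betw_iff_bijections)
  have "b z \<noteq> 0" if "z \<noteq> 0" for z
  proof -
    have "one_O z = g z * b z" using Teq[OF g(1)] g(2) by (simp add: fun_eq_iff)
    thus ?thesis using that by (auto simp: one_O_def)
  qed
  hence bU: "b \<in> U" using bO by (simp add: U_def)
  have aU: "\<Phi> one_O \<in> U" by (rule rank1_fwd(1)[OF q r1])
  have "T (\<Phi> one_O) = \<Psi> (T one_O)" by (rule com[OF one_O_Ohol])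
  hence "(\<lambda>z. \<Phi> one_O z * b z) = PhiA q (\<Psi> one_O) b"
    using Teq[OF U_Ohol[OF aU]] rank1_fwd(2)[OF q r2 bO] by (simp add: b_def)
  hence "\<forall>z. \<Psi> one_O z * b (q * z) = \<Phi> one_O z * b z"
    by (simp add: PhiA_def fun_eq_iff mult.commute)
  thus ?thesis using bU by (auto simp: relU_def)
qed

lemma iso_bwd:
  assumes q: "q \<noteq> 0" and r1: "rank1_obj q \<Phi>" and r2: "rank1_obj q \<Psi>"
    and rel: "relU q (\<Phi> one_O) (\<Psi> one_O)"
  shows "obj_iso \<Phi> \<Psi>"
proof -
  obtain b where bU: "b \<in> U" and rb: "\<And>z. \<Psi> one_O z * b (q * z) = \<Phi> one_O z * b z"
    using rel by (auto simp: relU_def)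
  define T where "T = (\<lambda>g z. g z * b z)"
  have bO: "b \<in> Ohol" using bU by (simp add: U_def)
  have into: "T g \<in> Ohol" if "g \<in> Ohol" for g using Ohol_mult[OF that bO] by (simp add: T_def)
  have inj: "inj_on T Ohol"
  proof (rule inj_onI)
    fix f g assume f: "f \<in> Ohol" and g: "g \<in> Ohol" and e: "T f = T g"
    have "f w = g w" for w
    proof (cases "w = 0")
      case True thus ?thesis using f g by (simp add: Ohol_0)
    next
      case False
      hence "b w \<noteq> 0" using bU by (simp add: U_nz)
      moreover have "f w * b w = g w * b w" using e by (simp add: T_def fun_eq_iff)
      ultimately show ?thesis by simp
    qed
    thus "f = g" by auto
  qed
  have surj: "g \<in> T ` Ohol" if g: "g \<in> Ohol" for g
  proof -
    have "mulU g (invU b) \<in> Ohol" using Ohol_mult[OF g U_Ohol[OF invU_U[OF bU]]] by (simp add: mulU_def)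
    moreover have "T (mulU g (invU b)) = g"
      using bU g by (auto simp: T_def mulU_def invU_def fun_eq_iff U_nz Ohol_0)
    ultimately show ?thesis by (metis image_eqI)
  qed
  have bij: "bij_betw T Ohol Ohol" unfolding bij_betw_def using inj into surj by blast
  have com: "T (\<Phi> f) = \<Psi> (T f)" if f: "f \<in> Ohol" for f
  proof -
    have "T (\<Phi> f) = (\<lambda>z. f (q * z) * \<Phi> one_O z * b z)"
      using rank1_fwd(2)[OF q r1 f] by (simp add: T_def PhiA_def)
    also have "\<dots> = (\<lambda>z. f (q * z) * b (q * z) * \<Psi> one_O z)"
      using rb by (simp add: fun_eq_iff mult_ac)
    also have "\<dots> = \<Psi> (T f)"
      using rank1_fwd(2)[OF q r2 into[OF f]] by (simp add: T_def PhiA_def)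
    finally show ?thesis .
  qed
  show ?thesis unfolding obj_iso_def
    by (intro exI[of _ T] conjI bij ballI com) (auto simp: T_def algebra_simps)
qed

lemma relU_refl: "q \<noteq> 0 \<Longrightarrow> a \<in> U \<Longrightarrow> relU q a a"
  unfolding relU_def by (intro bexI[of _ one_O] one_O_U) (simp add: one_O_shift)

lemma relU_sym:
  assumes q: "q \<noteq> 0" and a: "a \<in> U" and a': "a' \<in> U" and r: "relU q a a'"
  shows "relU q a' a"
proof -
  obtain b where b: "b \<in> U" "\<And>z. a' z * b (q * z) = a z * b z" using r by (auto simp: relU_def)
  have "a z * invU b (q * z) = a' z * invU b z" for z
  proof (cases "z = 0")
    case True thus ?thesis using a a' by (simp add: U_def Ohol_0)
  next
    case False
    have nz: "b z \<noteq> 0" "b (q * z) \<noteq> 0" using False q b(1) by (auto simp: U_nz)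
    have "a' z * b (q * z) = a z * b z" by (rule b(2))
    hence "a z / b (q * z) = a' z / b z" using nz by (simp add: field_simps)
    thus ?thesis using False q by (simp add: invU_def)
  qed
  thus ?thesis using invU_U[OF b(1)] by (auto simp: relU_def)
qed

lemma relU_trans:
  assumes r1: "relU q a a'" and r2: "relU q a' a''"
  shows "relU q a a''"
proof -
  obtain b1 where b1: "b1 \<in> U" "\<And>z. a' z * b1 (q * z) = a z * b1 z" using r1 by (auto simp: relU_def)
  obtain b2 where b2: "b2 \<in> U" "\<And>z. a'' z * b2 (q * z) = a' z * b2 z" using r2 by (auto simp: relU_def)
  have "a'' z * mulU b1 b2 (q * z) = a z * mulU b1 b2 z" for z
  proof -
    have "a'' z * mulU b1 b2 (q * z) = (a'' z * b2 (q * z)) * b1 (q * z)" by (simp add: mulU_def mult_ac)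
    also have "\<dots> = (a' z * b1 (q * z)) * b2 z" by (simp add: b2(2) mult_ac)
    also have "\<dots> = a z * mulU b1 b2 z" by (simp add: b1(2) mulU_def mult_ac)
    finally show ?thesis .
  qed
  thus ?thesis using mulU_U[OF b1(1) b2(1)] by (auto simp: relU_def)
qed

lemma relU_mul:
  assumes r1: "relU q a a'" and r2: "relU q c c'"
  shows "relU q (mulU a c) (mulU a' c')"
proof -
  obtain b1 where b1: "b1 \<in> U" "\<And>z. a' z * b1 (q * z) = a z * b1 z" using r1 by (auto simp: relU_def)
  obtain b2 where b2: "b2 \<in> U" "\<And>z. c' z * b2 (q * z) = c z * b2 z" using r2 by (auto simp: relU_def)
  have "mulU a' c' z * mulU b1 b2 (q * z) = mulU a c z * mulU b1 b2 z" for z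
  proof -
    have "mulU a' c' z * mulU b1 b2 (q * z) = (a' z * b1 (q * z)) * (c' z * b2 (q * z))"
      by (simp add: mulU_def mult_ac)
    also have "\<dots> = mulU a c z * mulU b1 b2 z" by (simp add: b1(2) b2(2) mulU_def mult_ac)
    finally show ?thesis .
  qed
  thus ?thesis using mulU_U[OF b1(1) b2(1)] by (auto simp: relU_def)
qed

definition cls :: "complex \<Rightarrow> (complex \<Rightarrow> complex) \<Rightarrow> ((complex \<Rightarrow> complex) \<Rightarrow> (complex \<Rightarrow> complex)) set" where
  "cls q a = pic_class q (PhiA q a)"

lemma rank1_PhiA: "q \<noteq> 0 \<Longrightarrow> a \<in> U \<Longrightarrow> rank1_obj q (PhiA q a)"
  by (rule rank1_bwd) auto

lemma pic_class_char:
  assumes q: "q \<noteq> 0" and r: "rank1_obj q \<Phi>"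
  shows "pic_class q \<Phi> = {\<Psi>. rank1_obj q \<Psi> \<and> relU q (\<Phi> one_O) (\<Psi> one_O)}"
  unfolding pic_class_def using iso_fwd[OF q r] iso_bwd[OF q r] by blast

lemma pic_class_cls:
  assumes q: "q \<noteq> 0" and r: "rank1_obj q \<Phi>"
  shows "pic_class q \<Phi> = cls q (\<Phi> one_O)"
proof -
  have aU: "\<Phi> one_O \<in> U" by (rule rank1_fwd(1)[OF q r])
  show ?thesis unfolding cls_def
    using pic_class_char[OF q r] pic_class_char[OF q rank1_PhiA[OF q aU]] PhiA_one[OF q U_Ohol[OF aU]]
    by simp
qed

lemma cls_char:
  assumes q: "q \<noteq> 0" and a: "a \<in> U"
  shows "cls q a = {\<Psi>. rank1_obj q \<Psi> \<and> relU q a (\<Psi> one_O)}"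
  unfolding cls_def using pic_class_char[OF q rank1_PhiA[OF q a]] PhiA_one[OF q U_Ohol[OF a]] by simp

lemma PhiA_mem: "q \<noteq> 0 \<Longrightarrow> a \<in> U \<Longrightarrow> PhiA q a \<in> cls q a"
  using cls_char[of q a] rank1_PhiA[of q a] PhiA_one[of q a] relU_refl[of q a] by (simp add: U_Ohol)

lemma mem_cls:
  assumes q: "q \<noteq> 0" and a: "a \<in> U" and m: "\<Psi> \<in> cls q a"
  shows "rank1_obj q \<Psi>" "\<Psi> one_O \<in> U" "relU q a (\<Psi> one_O)"
  using m cls_char[OF q a] rank1_fwd(1)[OF q] by auto

lemma cls_eq_iff:
  assumes q: "q \<noteq> 0" and a: "a \<in> U" and a': "a' \<in> U"
  shows "cls q a = cls q a' \<longleftrightarrow> relU q a a'"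
proof
  assume "cls q a = cls q a'"
  hence "PhiA q a' \<in> cls q a" using PhiA_mem[OF q a'] by simp
  thus "relU q a a'" using mem_cls(3)[OF q a] PhiA_one[OF q U_Ohol[OF a']] by metis
next
  assume r: "relU q a a'"
  have r': "relU q a' a" by (rule relU_sym[OF q a a' r])
  show "cls q a = cls q a'"
    unfolding cls_char[OF q a] cls_char[OF q a'] using relU_trans r r' by blast
qed

lemma some_cls:
  assumes q: "q \<noteq> 0" and a: "a \<in> U"
  shows "(SOME \<Phi>. \<Phi> \<in> cls q a) \<in> cls q a"
  by (rule someI[of "\<lambda>\<Phi>. \<Phi> \<in> cls q a", OF PhiA_mem[OF q a]])

lemma carrier_Pic: "q \<noteq> 0 \<Longrightarrow> carrier (Pic_Bq q) = {cls q a | a. a \<in> U}"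
  unfolding Pic_Bq_def using pic_class_cls rank1_PhiA rank1_fwd(1) by (auto simp: cls_def)

lemma obj_tensor_eq:
  assumes q: "q \<noteq> 0" and r1: "rank1_obj q \<Phi>1" and r2: "rank1_obj q \<Phi>2"
  shows "\<And>f. f \<in> Ohol \<Longrightarrow> obj_tensor \<Phi>1 \<Phi>2 f = PhiA q (mulU (\<Phi>1 one_O) (\<Phi>2 one_O)) f"
  using rank1_fwd(2)[OF q r1] by (simp add: obj_tensor_def PhiA_def mulU_def mult_ac)

lemma cls_mult:
  assumes q: "q \<noteq> 0" and a: "a \<in> U" and c: "c \<in> U"
  shows "cls q a \<otimes>\<^bsub>Pic_Bq q\<^esub> cls q c = cls q (mulU a c)"
proof -
  define \<Phi>1 where "\<Phi>1 = (SOME \<Phi>. \<Phi> \<in> cls q a)"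
  define \<Phi>2 where "\<Phi>2 = (SOME \<Phi>. \<Phi> \<in> cls q c)"
  have m1: "\<Phi>1 \<in> cls q a" unfolding \<Phi>1_def by (rule some_cls[OF q a])
  have m2: "\<Phi>2 \<in> cls q c" unfolding \<Phi>2_def by (rule some_cls[OF q c])
  note r1 = mem_cls[OF q a m1] and r2 = mem_cls[OF q c m2]
  have uU: "mulU (\<Phi>1 one_O) (\<Phi>2 one_O) \<in> U" by (rule mulU_U[OF r1(2) r2(2)])
  have rt: "rank1_obj q (obj_tensor \<Phi>1 \<Phi>2)"
    by (rule rank1_bwd[OF q uU obj_tensor_eq[OF q r1(1) r2(1)]])
  have "obj_tensor \<Phi>1 \<Phi>2 one_O = mulU (\<Phi>1 one_O) (\<Phi>2 one_O)"
    using obj_tensor_eq[OF q r1(1) r2(1) one_O_Ohol] PhiA_one[OF q U_Ohol[OF uU]] by simp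
  hence "pic_class q (obj_tensor \<Phi>1 \<Phi>2) = cls q (mulU (\<Phi>1 one_O) (\<Phi>2 one_O))"
    using pic_class_cls[OF q rt] by simp
  also have "\<dots> = cls q (mulU a c)"
    using cls_eq_iff[OF q uU mulU_U[OF a c]] relU_sym[OF q mulU_U[OF a c] uU]
      relU_mul[OF r1(3) r2(3)] by blast
  finally show ?thesis by (simp add: Pic_Bq_def \<Phi>1_def \<Phi>2_def)
qed

lemma one_Pic: "q \<noteq> 0 \<Longrightarrow> \<one>\<^bsub>Pic_Bq q\<^esub> = cls q one_O"
proof -
  assume q: "q \<noteq> 0"
  have e: "\<And>f. f \<in> Ohol \<Longrightarrow> qshift q f = PhiA q one_O f"
    by (auto simp: qshift_def PhiA_def one_O_def fun_eq_iff Ohol_0)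
  have r: "rank1_obj q (qshift q)" by (rule rank1_bwd[OF q one_O_U e])
  have "qshift q one_O = one_O" using q by (simp add: qshift_def one_O_shift fun_eq_iff)
  thus ?thesis using pic_class_cls[OF q r] by (simp add: Pic_Bq_def)
qed

lemma group_Pic:
  assumes q: "q \<noteq> 0"
  shows "group (Pic_Bq q)"
proof (rule groupI)
  note car = carrier_Pic[OF q]
  show "\<one>\<^bsub>Pic_Bq q\<^esub> \<in> carrier (Pic_Bq q)" using one_Pic[OF q] one_O_U car by auto
  fix x assume "x \<in> carrier (Pic_Bq q)"
  then obtain a where a: "a \<in> U" "x = cls q a" using car by auto
  show "\<one>\<^bsub>Pic_Bq q\<^esub> \<otimes>\<^bsub>Pic_Bq q\<^esub> x = x"
    using a one_Pic[OF q] cls_mult[OF q one_O_U a(1)] mulU_one[OF a(1)] by simp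
  show "\<exists>y\<in>carrier (Pic_Bq q). y \<otimes>\<^bsub>Pic_Bq q\<^esub> x = \<one>\<^bsub>Pic_Bq q\<^esub>"
    using a one_Pic[OF q] cls_mult[OF q invU_U[OF a(1)] a(1)] mulU_invU[OF a(1)] car invU_U[OF a(1)]
    by auto
  fix y assume "y \<in> carrier (Pic_Bq q)"
  then obtain c where c: "c \<in> U" "y = cls q c" using car by auto
  show "x \<otimes>\<^bsub>Pic_Bq q\<^esub> y \<in> carrier (Pic_Bq q)"
    using a c cls_mult[OF q a(1) c(1)] mulU_U[OF a(1) c(1)] car by auto
  fix z assume "z \<in> carrier (Pic_Bq q)"
  then obtain d where d: "d \<in> U" "z = cls q d" using car by auto
  show "x \<otimes>\<^bsub>Pic_Bq q\<^esub> y \<otimes>\<^bsub>Pic_Bq q\<^esub> z = x \<otimes>\<^bsub>Pic_Bq q\<^esub> (y \<otimes>\<^bsub>Pic_Bq q\<^esub> z)"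
    using a c d cls_mult[OF q] mulU_U mulU_assoc by simp
qed

definition cst :: "complex \<Rightarrow> complex \<Rightarrow> complex" where
  "cst w = (\<lambda>z. if z = 0 then 0 else w)"
definition zp :: "int \<Rightarrow> complex \<Rightarrow> complex" where
  "zp m = (\<lambda>z. if z = 0 then 0 else z powi m)"
definition expO :: "(complex \<Rightarrow> complex) \<Rightarrow> complex \<Rightarrow> complex" where
  "expO g = (\<lambda>z. if z = 0 then 0 else exp (g z))"
definition degU :: "(complex \<Rightarrow> complex) \<Rightarrow> int" where
  "degU a = (THE m. \<exists>h. h holomorphic_on (- {0}) \<and> (\<forall>z. z \<noteq> 0 \<longrightarrow> a z = z powi m * exp (h z)))"

lemma cst_U: "w \<noteq> 0 \<Longrightarrow> cst w \<in> U"
  using Ohol_if0[of "\<lambda>_. w"] by (auto simp: U_def cst_def intro: holomorphic_intros)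

lemma zp_U: "zp m \<in> U"
proof -
  have "(\<lambda>z. z powi m) holomorphic_on (- {0})" by (intro holomorphic_intros) auto
  thus ?thesis using Ohol_if0[of "\<lambda>z. z powi m"] by (auto simp: U_def zp_def)
qed

lemma expO_U: "g holomorphic_on (- {0}) \<Longrightarrow> expO g \<in> U"
proof -
  assume g: "g holomorphic_on (- {0})"
  have "(\<lambda>z. exp (g z)) holomorphic_on (- {0})" using g by (intro holomorphic_intros)
  thus ?thesis using Ohol_if0[of "\<lambda>z. exp (g z)"] by (auto simp: U_def expO_def)
qed

lemma deg_eq:
  assumes h: "h holomorphic_on (- {0})" and e: "\<And>z. z \<noteq> 0 \<Longrightarrow> a z = z powi m * exp (h z)"
  shows "degU a = m"
  unfolding degU_def
proof (rule the_equality)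
  show "\<exists>h. h holomorphic_on - {0} \<and> (\<forall>z. z \<noteq> 0 \<longrightarrow> a z = z powi m * exp (h z))"
    using h e by blast
  fix m' assume "\<exists>h. h holomorphic_on - {0} \<and> (\<forall>z. z \<noteq> 0 \<longrightarrow> a z = z powi m' * exp (h z))"
  then obtain h' where h': "h' holomorphic_on - {0}" "\<And>z. z \<noteq> 0 \<Longrightarrow> a z = z powi m' * exp (h' z)"
    by blast
  have "z powi (m' - m) = exp (h z - h' z)" if z: "z \<noteq> 0" for z
  proof -
    have "z powi m' * exp (h' z) = z powi m * exp (h z)" using e[OF z] h'(2)[OF z] by simp
    hence "z powi m' / z powi m = exp (h z) / exp (h' z)"
      using z by (simp add: field_simps)
    thus ?thesis using z by (simp add: power_int_diff exp_diff)
  qed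
  hence "m' - m = 0"
    by (intro uniq_deg[of "\<lambda>z. h z - h' z"]) (use h h'(1) in \<open>auto intro: holomorphic_intros\<close>)
  thus "m' = m" by simp
qed

lemma deg_U:
  assumes a: "a \<in> U"
  obtains h where "h holomorphic_on (- {0})" "\<And>z. z \<noteq> 0 \<Longrightarrow> a z = z powi (degU a) * exp (h z)"
proof -
  obtain m h where "h holomorphic_on (- {0})" "\<And>z. z \<noteq> 0 \<Longrightarrow> a z = z powi m * exp (h z)"
    using structure_unit[OF U_holo[OF a] U_nz[OF a]] by blast
  moreover from deg_eq[OF this] have "degU a = m" .
  ultimately show ?thesis using that by blast
qed

lemma deg_rel:
  assumes q: "q \<noteq> 0" and a: "a \<in> U" and r: "relU q a a'"
  shows "degU a' = degU a"
proof -
  obtain b where bU: "b \<in> U" and rb: "\<And>z. a' z * b (q * z) = a z * b z" using r by (auto simp: relU_def)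
  obtain h where h: "h holomorphic_on (- {0})" "\<And>z. z \<noteq> 0 \<Longrightarrow> a z = z powi (degU a) * exp (h z)"
    using deg_U[OF a] by blast
  obtain g where g: "g holomorphic_on (- {0})" "\<And>z. z \<noteq> 0 \<Longrightarrow> b z = z powi (degU b) * exp (g z)"
    using deg_U[OF bU] by blast
  define k where "k = degU b"
  define h' where "h' z = h z + g z - g (q * z) - of_int k * Ln q" for z
  have h'h: "h' holomorphic_on (- {0})"
    unfolding h'_def by (intro holomorphic_intros h g holo_shift[OF q g(1)])
  have "a' z = z powi (degU a) * exp (h' z)" if z: "z \<noteq> 0" for z
  proof -
    have qz: "q * z \<noteq> 0" using q z by simp
    have E: "exp (of_int k * Ln q) = q powi k" by (rule exp_Ln_int[OF q])
    have "a' z * ((q * z) powi k * exp (g (q * z))) = z powi (degU a) * exp (h z) * (z powi k * exp (g z))"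
      using rb[of z] h(2)[OF z] g(2)[OF z] g(2)[OF qz] by (simp add: k_def)
    hence "a' z * (q powi k * z powi k * exp (g (q * z))) = z powi (degU a) * exp (h z) * (z powi k * exp (g z))"
      by (simp add: power_int_mult_distrib)
    hence "a' z = z powi (degU a) * exp (h z) * exp (g z) / (q powi k * exp (g (q * z)))"
      using q z by (simp add: field_simps)
    also have "\<dots> = z powi (degU a) * exp (h' z)"
      unfolding h'_def E[symmetric] by (simp add: exp_diff exp_add field_simps)
    finally show ?thesis .
  qed
  thus ?thesis by (rule deg_eq[OF h'h])
qed

lemma deg_mul:
  assumes a: "a \<in> U" and c: "c \<in> U"
  shows "degU (mulU a c) = degU a + degU c"
proof -
  obtain h where h: "h holomorphic_on (- {0})" "\<And>z. z \<noteq> 0 \<Longrightarrow> a z = z powi (degU a) * exp (h z)"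
    using deg_U[OF a] by blast
  obtain g where g: "g holomorphic_on (- {0})" "\<And>z. z \<noteq> 0 \<Longrightarrow> c z = z powi (degU c) * exp (g z)"
    using deg_U[OF c] by blast
  show ?thesis
  proof (rule deg_eq[of "\<lambda>z. h z + g z"])
    show "(\<lambda>z. h z + g z) holomorphic_on - {0}" by (intro holomorphic_intros h g)
    fix z :: complex assume z: "z \<noteq> 0"
    show "mulU a c z = z powi (degU a + degU c) * exp (h z + g z)"
      using z h(2)[OF z] g(2)[OF z] by (simp add: mulU_def power_int_add exp_add mult_ac)
  qed
qed

lemma deg_zp: "degU (zp m) = m"
  by (rule deg_eq[of "\<lambda>_. 0"]) (auto simp: zp_def)

lemma deg_cst: "w \<noteq> 0 \<Longrightarrow> degU (cst w) = 0"
  by (rule deg_eq[of "\<lambda>_. Ln w"]) (auto simp: cst_def)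

lemma qorbit_self: "w \<in> qorbit q w"
  unfolding qorbit_def by (rule CollectI, rule exI[of _ 0]) simp

lemma qorbit_shift:
  assumes q: "q \<noteq> 0"
  shows "qorbit q (w * q powi n) = qorbit q w"
proof
  show "qorbit q (w * q powi n) \<subseteq> qorbit q w"
  proof
    fix x assume "x \<in> qorbit q (w * q powi n)"
    then obtain m where "x = w * q powi n * q powi m" by (auto simp: qorbit_def)
    hence "x = w * q powi (n + m)" using q by (simp add: power_int_add mult.assoc)
    thus "x \<in> qorbit q w" by (auto simp: qorbit_def)
  qed
  show "qorbit q w \<subseteq> qorbit q (w * q powi n)"
  proof
    fix x assume "x \<in> qorbit q w"
    then obtain m where "x = w * q powi m" by (auto simp: qorbit_def)
    hence "x = w * q powi n * q powi (m - n)" using q by (simp add: power_int_diff mult.assoc)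
    thus "x \<in> qorbit q (w * q powi n)" by (auto simp: qorbit_def)
  qed
qed

lemma qorbit_mult:
  assumes q: "q \<noteq> 0"
  shows "{a * b |a b. a \<in> qorbit q w \<and> b \<in> qorbit q w'} = qorbit q (w * w')"
proof
  show "{a * b |a b. a \<in> qorbit q w \<and> b \<in> qorbit q w'} \<subseteq> qorbit q (w * w')"
  proof
    fix x assume "x \<in> {a * b |a b. a \<in> qorbit q w \<and> b \<in> qorbit q w'}"
    then obtain n m where "x = (w * q powi n) * (w' * q powi m)" by (auto simp: qorbit_def)
    hence "x = (w * w') * q powi (n + m)" using q by (simp add: power_int_add mult_ac)
    thus "x \<in> qorbit q (w * w')" by (auto simp: qorbit_def)
  qed
  show "qorbit q (w * w') \<subseteq> {a * b |a b. a \<in> qorbit q w \<and> b \<in> qorbit q w'}"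
  proof
    fix x assume "x \<in> qorbit q (w * w')"
    then obtain n where "x = (w * q powi n) * w'" by (auto simp: qorbit_def mult_ac)
    moreover have "w * q powi n \<in> qorbit q w" by (auto simp: qorbit_def)
    ultimately show "x \<in> {a * b |a b. a \<in> qorbit q w \<and> b \<in> qorbit q w'}"
      using qorbit_self[of w' q] by blast
  qed
qed

lemma cls_cst_shift:
  assumes q: "q \<noteq> 0" and w: "w \<noteq> 0"
  shows "cls q (cst (w * q powi n)) = cls q (cst w)"
proof -
  have wn: "w * q powi n \<noteq> 0" using q w by simp
  have "relU q (cst w) (cst (w * q powi n))"
    unfolding relU_def
  proof (intro bexI[of _ "zp (- n)"] allI zp_U)
    fix z :: complex
    show "cst (w * q powi n) z * zp (- n) (q * z) = cst w z * zp (- n) z"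
      using q by (cases "z = 0") (auto simp: cst_def zp_def power_int_mult_distrib power_int_minus field_simps)
  qed
  thus ?thesis using cls_eq_iff[OF q cst_U[OF w] cst_U[OF wn]] by simp
qed

definition inclM :: "complex \<Rightarrow> complex set \<Rightarrow> ((complex \<Rightarrow> complex) \<Rightarrow> (complex \<Rightarrow> complex)) set" where
  "inclM q A = cls q (cst (SOME w. w \<in> A))"

lemma inclM_orbit:
  assumes q: "q \<noteq> 0" and w: "w \<noteq> 0"
  shows "inclM q (qorbit q w) = cls q (cst w)"
proof -
  have "(SOME x. x \<in> qorbit q w) \<in> qorbit q w"
    by (rule someI[of "\<lambda>x. x \<in> qorbit q w", OF qorbit_self])
  then obtain n where "(SOME x. x \<in> qorbit q w) = w * q powi n" by (auto simp: qorbit_def)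
  thus ?thesis unfolding inclM_def using cls_cst_shift[OF q w] by simp
qed

definition projM :: "((complex \<Rightarrow> complex) \<Rightarrow> (complex \<Rightarrow> complex)) set \<Rightarrow> int" where
  "projM A = degU ((SOME \<Phi>. \<Phi> \<in> A) one_O)"

lemma pM_cls:
  assumes q: "q \<noteq> 0" and a: "a \<in> U"
  shows "projM (cls q a) = degU a"
  unfolding projM_def using deg_rel[OF q a mem_cls(3)[OF q a some_cls[OF q a]]] .

lemma cst_mul: "mulU (cst w) (cst w') = cst (w * w')"
  by (auto simp: mulU_def cst_def fun_eq_iff)

lemma cst_inj:
  assumes q: "norm q = 1" and w: "w \<noteq> 0" and w': "w' \<noteq> 0" and e: "cls q (cst w) = cls q (cst w')"
  shows "qorbit q w = qorbit q w'"
proof -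
  have q0: "q \<noteq> 0" using q by auto
  have "relU q (cst w) (cst w')" using e cls_eq_iff[OF q0 cst_U[OF w] cst_U[OF w']] by simp
  then obtain b where bU: "b \<in> U" and rb: "\<And>z. cst w' z * b (q * z) = cst w z * b z"
    by (auto simp: relU_def)
  obtain g where g: "g holomorphic_on (- {0})" "\<And>z. z \<noteq> 0 \<Longrightarrow> b z = z powi (degU b) * exp (g z)"
    using deg_U[OF bU] by blast
  define k where "k = degU b"
  have "exp (g z - g (q * z)) = w' * q powi k / w" if z: "z \<noteq> 0" for z
  proof -
    have qz: "q * z \<noteq> 0" using q0 z by simp
    have "w' * ((q * z) powi k * exp (g (q * z))) = w * (z powi k * exp (g z))"
      using rb[of z] g(2)[OF z] g(2)[OF qz] z qz by (simp add: cst_def k_def)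
    hence "w' * (q powi k * z powi k * exp (g (q * z))) = w * (z powi k * exp (g z))"
      by (simp add: power_int_mult_distrib)
    thus ?thesis using z w q0 by (simp add: exp_diff field_simps)
  qed
  hence "w' * q powi k / w = 1" by (rule shift_const[OF g(1) q])
  hence "w = w' * q powi k" using w by (simp add: field_simps)
  thus ?thesis using qorbit_shift[OF q0] by simp
qed

theorem proposition4:
  fixes q :: complex
  assumes "cmod q = 1"
    and "\<forall>n::nat. n > 0 \<longrightarrow> q ^ n \<noteq> 1"
    and "\<exists>C L. C > 0 \<and> L > 0 \<and>
           (\<forall>n::int. n \<noteq> 0 \<longrightarrow> cmod (q powi n - 1) \<ge> C * \<bar>real_of_int n\<bar> powr (- L))"
  shows "group (Pic_Bq q) \<and>
    (\<exists>i p. i \<in> hom (Cstar_mod_q q) (Pic_Bq q) \<and> p \<in> hom (Pic_Bq q) integer_group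
       \<and> inj_on i (carrier (Cstar_mod_q q))
       \<and> p ` carrier (Pic_Bq q) = carrier integer_group
       \<and> i ` carrier (Cstar_mod_q q) = kernel (Pic_Bq q) integer_group p)"
proof -
  have qn: "norm q = 1" using assms(1) by simp
  have q: "q \<noteq> 0" using qn by auto
  obtain C L where C: "C > 0" and L: "L > 0"
    and dio: "\<forall>n::int. n \<noteq> 0 \<longrightarrow> cmod (q powi n - 1) \<ge> C * \<bar>real_of_int n\<bar> powr (- L)"
    using assms(3) by blast
  note car = carrier_Pic[OF q]
  have carC: "carrier (Cstar_mod_q q) = {qorbit q w | w. w \<noteq> 0}" by (simp add: Cstar_mod_q_def)
  have i_hom: "inclM q \<in> hom (Cstar_mod_q q) (Pic_Bq q)"
  proof (rule homI)
    fix x assume "x \<in> carrier (Cstar_mod_q q)"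
    then obtain w where w: "w \<noteq> 0" "x = qorbit q w" using carC by auto
    show "inclM q x \<in> carrier (Pic_Bq q)" using w inclM_orbit[OF q w(1)] cst_U[OF w(1)] car by auto
  next
    fix x y assume "x \<in> carrier (Cstar_mod_q q)" "y \<in> carrier (Cstar_mod_q q)"
    then obtain w w' where w: "w \<noteq> 0" "x = qorbit q w" and w': "w' \<noteq> 0" "y = qorbit q w'"
      using carC by auto
    have "x \<otimes>\<^bsub>Cstar_mod_q q\<^esub> y = qorbit q (w * w')"
      using w w' qorbit_mult[OF q] by (simp add: Cstar_mod_q_def)
    hence "inclM q (x \<otimes>\<^bsub>Cstar_mod_q q\<^esub> y) = cls q (cst (w * w'))"
      using inclM_orbit[OF q] w w' by simp
    also have "\<dots> = cls q (cst w) \<otimes>\<^bsub>Pic_Bq q\<^esub> cls q (cst w')"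
      using cls_mult[OF q cst_U[OF w(1)] cst_U[OF w'(1)]] cst_mul by simp
    finally show "inclM q (x \<otimes>\<^bsub>Cstar_mod_q q\<^esub> y) = inclM q x \<otimes>\<^bsub>Pic_Bq q\<^esub> inclM q y"
      using inclM_orbit[OF q] w w' by simp
  qed
  have p_hom: "projM \<in> hom (Pic_Bq q) integer_group"
  proof (rule homI)
    fix x assume "x \<in> carrier (Pic_Bq q)"
    show "projM x \<in> carrier integer_group" by (simp add: integer_group_def)
  next
    fix x y assume "x \<in> carrier (Pic_Bq q)" "y \<in> carrier (Pic_Bq q)"
    then obtain a c where a: "a \<in> U" "x = cls q a" and c: "c \<in> U" "y = cls q c" using car by auto
    show "projM (x \<otimes>\<^bsub>Pic_Bq q\<^esub> y) = projM x \<otimes>\<^bsub>integer_group\<^esub> projM y"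
      using a c cls_mult[OF q a(1) c(1)] pM_cls[OF q] mulU_U deg_mul
      by (simp add: integer_group_def)
  qed
  have inj: "inj_on (inclM q) (carrier (Cstar_mod_q q))"
  proof (rule inj_onI)
    fix x y assume "x \<in> carrier (Cstar_mod_q q)" "y \<in> carrier (Cstar_mod_q q)" "inclM q x = inclM q y"
    then obtain w w' where w: "w \<noteq> 0" "x = qorbit q w" and w': "w' \<noteq> 0" "y = qorbit q w'"
      and e: "inclM q (qorbit q w) = inclM q (qorbit q w')"
      using carC by auto
    have "cls q (cst w) = cls q (cst w')" using e inclM_orbit[OF q] w w' by simp
    thus "x = y" using cst_inj[OF qn w(1) w'(1)] w w' by simp
  qed
  have surj: "projM ` carrier (Pic_Bq q) = carrier integer_group"
  proof -
    have "m \<in> projM ` carrier (Pic_Bq q)" for m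
    proof
      show "m = projM (cls q (zp m))" using pM_cls[OF q zp_U] deg_zp by simp
      show "cls q (zp m) \<in> carrier (Pic_Bq q)" using car zp_U by auto
    qed
    thus ?thesis by (auto simp: integer_group_def)
  qed
  have ker: "inclM q ` carrier (Cstar_mod_q q) = kernel (Pic_Bq q) integer_group projM"
  proof
    show "inclM q ` carrier (Cstar_mod_q q) \<subseteq> kernel (Pic_Bq q) integer_group projM"
    proof
      fix x assume "x \<in> inclM q ` carrier (Cstar_mod_q q)"
      then obtain w where w: "w \<noteq> 0" "x = cls q (cst w)" using carC inclM_orbit[OF q] by auto
      show "x \<in> kernel (Pic_Bq q) integer_group projM"
        using w car cst_U[OF w(1)] pM_cls[OF q cst_U[OF w(1)]] deg_cst[OF w(1)]
        by (auto simp: kernel_def integer_group_def)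
    qed
    show "kernel (Pic_Bq q) integer_group projM \<subseteq> inclM q ` carrier (Cstar_mod_q q)"
    proof
      fix x assume "x \<in> kernel (Pic_Bq q) integer_group projM"
      then obtain a where a: "a \<in> U" "x = cls q a" and d: "degU a = 0"
        using car pM_cls[OF q] by (auto simp: kernel_def integer_group_def)
      obtain h where h: "h holomorphic_on (- {0})" "\<And>z. z \<noteq> 0 \<Longrightarrow> a z = z powi (degU a) * exp (h z)"
        using deg_U[OF a(1)] by blast
      obtain h0 g where g: "g holomorphic_on (- {0})" "\<And>z. z \<noteq> 0 \<Longrightarrow> g (q * z) - g z = h z - h0"
        using coh[OF h(1) qn C L dio] by blast
      have "relU q a (cst (exp h0))"
        unfolding relU_def
      proof (intro bexI[of _ "expO g"] allI expO_U[OF g(1)])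
        fix z :: complex
        show "cst (exp h0) z * expO g (q * z) = a z * expO g z"
        proof (cases "z = 0")
          case True thus ?thesis using a(1) by (simp add: cst_def expO_def U_def Ohol_0)
        next
          case False
          have "h0 + g (q * z) = h z + g z" using g(2)[OF False] by (simp add: algebra_simps)
          hence "exp h0 * exp (g (q * z)) = exp (h z) * exp (g z)" by (metis exp_add)
          thus ?thesis using False q h(2)[OF False] d by (simp add: cst_def expO_def)
        qed
      qed
      hence "x = cls q (cst (exp h0))"
        using a cls_eq_iff[OF q a(1) cst_U] by simp
      moreover have "qorbit q (exp h0) \<in> carrier (Cstar_mod_q q)" using carC by auto
      ultimately show "x \<in> inclM q ` carrier (Cstar_mod_q q)"
        using inclM_orbit[OF q, of "exp h0"] by (metis exp_not_eq_zero image_eqI)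
    qed
  qed
  show ?thesis using group_Pic[OF q] i_hom p_hom inj surj ker by blast
qed

end
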